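(* Let $G_{n,d}$ be a uniformly random $d$-regular graph on $[n]$ ($dn$ even) and let $\{a_i,b_i\}$, $i=1,\dots,k$, be distinct pairs of distinct vertices with $k\le n/(8d)$. Then, for $n$ sufficiently large, $$\mathbb P\big(\{a_i,b_i\}\in E(G_{n,d})\text{ for all }1\le i\le k\big)\le\left(\frac{20d}{n}\right)^{k}.$$ *)

theory Defs
  imports "HOL-Probability.Probability"
begin

definition all_edges :: "nat \<Rightarrow> nat set set" where
  "all_edges n = {e. e \<subseteq> {1..n} \<and> card e = 2}"

definition degree :: "nat set set \<Rightarrow> nat \<Rightarrow> nat" where
  "degree E v = card {e \<in> E. v \<in> e}"

definition regular_graphs :: "nat \<Rightarrow> nat \<Rightarrow> nat set set set" where
  "regular_graphs n d =
     {E. E \<subseteq> all_edges n \<and> (\<forall>v\<in>{1..n}. degree E v = d)}"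

definition random_regular :: "nat \<Rightarrow> nat \<Rightarrow> nat set set pmf" where
  "random_regular n d = pmf_of_set (regular_graphs n d)"

end

theory Submission
  imports Defs
begin

definition Nb :: "nat set set \<Rightarrow> nat \<Rightarrow> nat set" where
  "Nb G x = {y. {x,y} \<in> G}"

lemma finite_all_edges: "finite (all_edges n)"
proof -
  have "all_edges n \<subseteq> Pow {1..n}" by (auto simp: all_edges_def)
  thus ?thesis by (rule finite_subset) auto
qed

lemma finite_regular: "finite (regular_graphs n d)"
proof -
  have "regular_graphs n d \<subseteq> Pow (all_edges n)" by (auto simp: regular_graphs_def)
  thus ?thesis using finite_all_edges[of n] by (metis finite_Pow_iff finite_subset)
qed

lemma reg_sub: "G \<in> regular_graphs n d \<Longrightarrow> G \<subseteq> all_edges n"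
  by (simp add: regular_graphs_def)

lemma reg_finite: "G \<in> regular_graphs n d \<Longrightarrow> finite G"
  using reg_sub finite_all_edges by (metis finite_subset)

lemma edge_props: assumes "G \<subseteq> all_edges n" "{x,y} \<in> G"
  shows "x \<noteq> y \<and> x \<in> {1..n} \<and> y \<in> {1..n}"
proof -
  have "{x,y} \<in> all_edges n" using assms by auto
  hence "{x,y} \<subseteq> {1..n}" "card {x,y} = 2" by (auto simp: all_edges_def)
  thus ?thesis by (cases "x = y") auto
qed

lemma Nb_sub: "G \<subseteq> all_edges n \<Longrightarrow> Nb G x \<subseteq> {1..n}"
  using edge_props[of G n x] unfolding Nb_def by auto

lemma Nb_finite: "G \<subseteq> all_edges n \<Longrightarrow> finite (Nb G x)"
  using Nb_sub[of G n x] by (metis finite_subset finite_atLeastAtMost)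

lemma Nb_card: assumes "G \<in> regular_graphs n d" "x \<in> {1..n}"
  shows "card (Nb G x) = d"
proof -
  have sub: "G \<subseteq> all_edges n" using assms reg_sub by blast
  have "bij_betw (\<lambda>y. {x,y}) (Nb G x) {e\<in>G. x \<in> e}"
  proof (rule bij_betwI')
    fix y z assume "y \<in> Nb G x" "z \<in> Nb G x"
    show "({x, y} = {x, z}) = (y = z)" by (auto simp: doubleton_eq_iff)
  next
    fix y assume "y \<in> Nb G x" thus "{x,y} \<in> {e\<in>G. x \<in> e}" by (auto simp: Nb_def)
  next
    fix e assume e: "e \<in> {e\<in>G. x \<in> e}"
    hence "card e = 2" using sub by (auto simp: all_edges_def)
    then obtain u v where uv: "e = {u,v}" "u \<noteq> v" by (auto simp: card_2_iff)
    show "\<exists>y\<in>Nb G x. e = {x, y}"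
    proof (cases "x = u")
      case True thus ?thesis using e uv by (auto simp: Nb_def)
    next
      case False hence "x = v" using e uv by auto
      thus ?thesis using e uv by (intro bexI[of _ u]) (auto simp: Nb_def insert_commute)
    qed
  qed
  hence "card (Nb G x) = degree G x" unfolding degree_def by (rule bij_betw_same_card)
  thus ?thesis using assms by (simp add: regular_graphs_def)
qed


definition swp :: "nat set set \<Rightarrow> nat \<Rightarrow> nat \<Rightarrow> nat \<Rightarrow> nat \<Rightarrow> nat set set" where
  "swp G a b x y = (G - {{a,b},{x,y}}) \<union> {{a,x},{b,y}}"

definition valid :: "nat set set \<Rightarrow> nat set set \<Rightarrow> nat \<Rightarrow> nat \<Rightarrow> (nat \<times> nat) set" where
  "valid F G a b = {(x,y). {x,y}\<in>G \<and> {x,y}\<notin>F \<and> x\<notin>{a,b} \<and> y\<notin>{a,b} \<and> {a,x}\<notin>G \<and> {b,y}\<notin>G}"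

lemma card_ins_diff: "finite S \<Longrightarrow> p \<in> S \<Longrightarrow> q \<notin> S \<Longrightarrow> card (insert q (S - {p})) = card S"
proof -
  assume a: "finite S" "p \<in> S" "q \<notin> S"
  hence "card (insert q (S - {p})) = Suc (card (S - {p}))" by (simp add: card_insert_disjoint)
  also have "\<dots> = card S" using a by (simp add: card_Diff_singleton card_gt_0_iff Suc_pred') (metis Suc_pred card_gt_0_iff empty_iff)
  finally show ?thesis .
qed

lemma ob2: "u \<noteq> w \<Longrightarrow> of_bool (v \<in> {u,w}) = of_bool (v=u) + (of_bool (v=w)::nat)"
  by auto

lemma card_two_filter: "p \<noteq> q \<Longrightarrow> card ({p,q} \<inter> {e. v \<in> e}) = of_bool (v \<in> p) + of_bool (v \<in> q)"
  by (cases "v \<in> p"; cases "v \<in> q") auto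

lemma degree_swap:
  assumes fin: "finite G" and pq: "p \<in> G" "q \<in> G" "p \<noteq> q" and rs: "r \<notin> G" "s \<notin> G" "r \<noteq> s"
    and cnt: "of_bool (v \<in> p) + of_bool (v \<in> q) = (of_bool (v \<in> r) + of_bool (v \<in> s) :: nat)"
  shows "card {e \<in> (G - {p,q}) \<union> {r,s}. v \<in> e} = card {e \<in> G. v \<in> e}"
proof -
  let ?S = "{e \<in> G. v \<in> e}"
  have eq: "{e \<in> (G - {p,q}) \<union> {r,s}. v \<in> e} = (?S - ({p,q} \<inter> {e. v \<in> e})) \<union> ({r,s} \<inter> {e. v \<in> e})"
    by blast
  have fS: "finite ?S" using fin by simp
  have d: "(?S - ({p,q} \<inter> {e. v \<in> e})) \<inter> ({r,s} \<inter> {e. v \<in> e}) = {}" using rs by blast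
  have sub: "{p,q} \<inter> {e. v \<in> e} \<subseteq> ?S" using pq by blast
  have "card {e \<in> (G - {p,q}) \<union> {r,s}. v \<in> e} = card (?S - ({p,q} \<inter> {e. v \<in> e})) + card ({r,s} \<inter> {e. v \<in> e})"
    unfolding eq by (rule card_Un_disjoint) (use fS d in auto)
  also have "card (?S - ({p,q} \<inter> {e. v \<in> e})) = card ?S - card ({p,q} \<inter> {e. v \<in> e})"
    by (rule card_Diff_subset) (use sub in auto)
  also have "card ({p,q} \<inter> {e. v \<in> e}) = card ({r,s} \<inter> {e. v \<in> e})"
    using card_two_filter[OF pq(3)] card_two_filter[OF rs(3)] cnt by simp
  finally show ?thesis using card_mono[OF fS sub] card_two_filter[OF pq(3)] card_two_filter[OF rs(3)] cnt by simp
qed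

lemma swp_regular:
  assumes G: "G \<in> regular_graphs n d" and ab: "{a,b} \<in> G" and v: "(x,y) \<in> valid F G a b"
  shows "swp G a b x y \<in> regular_graphs n d"
proof -
  have sub: "G \<subseteq> all_edges n" using G reg_sub by blast
  have fin: "finite G" using G reg_finite by blast
  have xy: "{x,y} \<in> G" "x \<notin> {a,b}" "y \<notin> {a,b}" "{a,x} \<notin> G" "{b,y} \<notin> G"
    using v by (auto simp: valid_def)
  have abp: "a \<noteq> b" "a \<in> {1..n}" "b \<in> {1..n}" using edge_props[OF sub ab] by auto
  have xyp: "x \<noteq> y" "x \<in> {1..n}" "y \<in> {1..n}" using edge_props[OF sub xy(1)] by auto
  have ne1: "{a,b} \<noteq> {x,y}" using xy(2) by auto
  have ne2: "{a,x} \<noteq> {b,y}" using abp(1) xy(3) by (metis insertCI insertE singletonD)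
  let ?H = "swp G a b x y"
  have "?H \<subseteq> all_edges n"
  proof
    fix e assume "e \<in> ?H"
    then consider "e \<in> G" | "e = {a,x}" | "e = {b,y}" unfolding swp_def by blast
    thus "e \<in> all_edges n"
    proof cases
      case 1 thus ?thesis using sub by auto
    next
      case 2 thus ?thesis using abp xyp xy by (auto simp: all_edges_def)
    next
      case 3 thus ?thesis using abp xyp xy by (auto simp: all_edges_def)
    qed
  qed
  moreover have "degree ?H v = d" if vn: "v \<in> {1..n}" for v
  proof -
    have dG: "degree G v = d" using G vn by (simp add: regular_graphs_def)
    have cnt: "of_bool (v \<in> {a,b}) + of_bool (v \<in> {x,y}) = (of_bool (v \<in> {a,x}) + of_bool (v \<in> {b,y}) :: nat)"
    proof -
      have ax: "a \<noteq> x" "b \<noteq> y" using xy(2,3) by auto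
      show ?thesis using ob2[OF abp(1), of v] ob2[OF xyp(1), of v] ob2[OF ax(1), of v] ob2[OF ax(2), of v]
        by simp
    qed
    have "card {e\<in>?H. v \<in> e} = card {e \<in> G. v \<in> e}"
      unfolding swp_def by (rule degree_swap[OF fin ab xy(1) ne1 xy(4) xy(5) ne2 cnt])
    thus ?thesis using dG by (simp add: degree_def)
  qed
  ultimately show ?thesis by (simp add: regular_graphs_def)
qed

lemma swp_inv:
  assumes G: "G \<in> regular_graphs n d" and ab: "{a,b} \<in> G" and v: "(x,y) \<in> valid F G a b"
  shows "(swp G a b x y - {{a,x},{b,y}}) \<union> {{a,b},{x,y}} = G"
proof -
  have sub: "G \<subseteq> all_edges n" using G reg_sub by blast
  have xy: "{x,y} \<in> G" "x \<notin> {a,b}" "y \<notin> {a,b}" "{a,x} \<notin> G" "{b,y} \<notin> G"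
    using v by (auto simp: valid_def)
  have abp: "a \<noteq> b" using edge_props[OF sub ab] by auto
  have xyp: "x \<noteq> y" using edge_props[OF sub xy(1)] by auto
  show ?thesis using xy abp xyp ab by (auto simp: swp_def doubleton_eq_iff)
qed

lemma swp_props:
  assumes G: "G \<in> regular_graphs n d" and ab: "{a,b} \<in> G" and v: "(x,y) \<in> valid F G a b"
    and FG: "F \<subseteq> G" and abF: "{a,b} \<notin> F"
  shows "F \<subseteq> swp G a b x y" "{a,b} \<notin> swp G a b x y" "x \<in> Nb (swp G a b x y) a"
    "y \<in> Nb (swp G a b x y) b"
proof -
  have sub: "G \<subseteq> all_edges n" using G reg_sub by blast
  have xy: "{x,y} \<in> G" "x \<notin> {a,b}" "y \<notin> {a,b}" "{a,x} \<notin> G" "{b,y} \<notin> G" "{x,y} \<notin> F"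
    using v by (auto simp: valid_def)
  have abp: "a \<noteq> b" using edge_props[OF sub ab] by auto
  have xyp: "x \<noteq> y" using edge_props[OF sub xy(1)] by auto
  show "F \<subseteq> swp G a b x y" using FG abF xy by (auto simp: swp_def)
  show "{a,b} \<notin> swp G a b x y" using xy abp xyp by (auto simp: swp_def doubleton_eq_iff)
  show "x \<in> Nb (swp G a b x y) a" "y \<in> Nb (swp G a b x y) b" by (auto simp: swp_def Nb_def)
qed


lemma card_le_sum_const: "finite A \<Longrightarrow> (\<And>x. x \<in> A \<Longrightarrow> card (B x) \<le> c) \<Longrightarrow> sum (\<lambda>x. card (B x)) A \<le> card A * c"
  using sum_bounded_above[of A "\<lambda>x. card (B x)" c] by simp

lemma valid_lower:
  assumes G: "G \<in> regular_graphs n d" and ab: "{a,b} \<in> G" and F: "F \<subseteq> all_edges n" 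
  shows "n * d \<le> card (valid F G a b) + 4*d*d + 4 * card F"
proof -
  have sub: "G \<subseteq> all_edges n" using G reg_sub by blast
  have finF: "finite F" using F finite_all_edges[of n] by (metis finite_subset)
  have abp: "a \<noteq> b" "a \<in> {1..n}" "b \<in> {1..n}" using edge_props[OF sub ab] by auto
  have finNb: "\<And>x. finite (Nb G x)" using Nb_finite[OF sub] by blast
  have cNb: "\<And>x. x \<in> {1..n} \<Longrightarrow> card (Nb G x) = d" using Nb_card[OF G] by blast
  define P where "P = Sigma {1..n} (Nb G)"
  define X where "X = Nb G a \<union> Nb G b"
  define B1 where "B1 = Sigma X (Nb G)"
  define B2 where "B2 = (\<lambda>(y,x). (x,y)) ` B1"
  define B3 where "B3 = (\<Union>f\<in>F. f \<times> f)"
  have XS: "X \<subseteq> {1..n}" using Nb_sub[OF sub] unfolding X_def by blast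
  have finX: "finite X" using finNb unfolding X_def by blast
  have cP: "card P = n * d" unfolding P_def
    by (subst card_SigmaI) (auto simp: finNb cNb)
  have cX: "card X \<le> 2 * d" unfolding X_def
    using card_Un_le[of "Nb G a" "Nb G b"] cNb abp by simp
  have cB1: "card B1 \<le> 2 * d * d"
  proof -
    have "card B1 = (\<Sum>x\<in>X. card (Nb G x))" unfolding B1_def
      by (subst card_SigmaI) (auto simp: finNb finX)
    also have "\<dots> \<le> card X * d" by (rule card_le_sum_const[OF finX]) (use XS cNb in auto)
    also have "\<dots> \<le> 2 * d * d" using cX by simp
    finally show ?thesis .
  qed
  have finB1: "finite B1" unfolding B1_def using finX finNb by auto
  have cB2: "card B2 \<le> 2 * d * d" unfolding B2_def using card_image_le[OF finB1] cB1 le_trans by blast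
  have cB3: "card B3 \<le> 4 * card F"
  proof -
    have "card B3 \<le> (\<Sum>f\<in>F. card (f \<times> f))" unfolding B3_def by (rule card_UN_le[OF finF])
    also have "\<dots> \<le> card F * 4"
    proof (rule card_le_sum_const[OF finF])
      fix f assume "f \<in> F" hence "card f = 2" using F by (auto simp: all_edges_def)
      thus "card (f \<times> f) \<le> 4" by (simp add: card_cartesian_product)
    qed
    finally show ?thesis by simp
  qed
  have "P - (B1 \<union> B2 \<union> B3) \<subseteq> valid F G a b"
  proof
    fix p assume p: "p \<in> P - (B1 \<union> B2 \<union> B3)"
    obtain x y where pxy: "p = (x,y)" by (cases p)
    have e: "{x,y} \<in> G" using p pxy unfolding P_def Nb_def by auto
    have yx: "{y,x} \<in> G" using e by (simp add: insert_commute)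
    have bN: "b \<in> X" "a \<in> X" using ab by (auto simp: X_def Nb_def insert_commute)
    have xX: "x \<notin> X" using p pxy e unfolding B1_def Nb_def by auto
    have yX: "y \<notin> X"
    proof
      assume "y \<in> X" hence "(y,x) \<in> B1" unfolding B1_def Nb_def using yx by auto
      hence "(x,y) \<in> B2" unfolding B2_def by force
      thus False using p pxy by auto
    qed
    have "{x,y} \<notin> F" using p pxy unfolding B3_def by auto
    moreover have "x \<notin> {a,b}" "y \<notin> {a,b}" using xX yX bN by auto
    moreover have "{a,x} \<notin> G" using xX by (auto simp: X_def Nb_def)
    moreover have "{b,y} \<notin> G" using yX by (auto simp: X_def Nb_def)
    ultimately show "p \<in> valid F G a b" using e pxy by (simp add: valid_def)
  qed
  moreover have "finite (valid F G a b)"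
  proof -
    have "valid F G a b \<subseteq> P"
    proof
      fix p assume p: "p \<in> valid F G a b"
      obtain x y where pxy: "p = (x,y)" by (cases p)
      have e: "{x,y} \<in> G" using p pxy by (simp add: valid_def)
      have "x \<in> {1..n}" using edge_props[OF sub e] by simp
      thus "p \<in> P" using e pxy by (simp add: P_def Nb_def)
    qed
    moreover have "finite P" unfolding P_def using finNb by auto
    ultimately show ?thesis by (metis finite_subset)
  qed
  ultimately have c1: "card (P - (B1 \<union> B2 \<union> B3)) \<le> card (valid F G a b)" by (rule card_mono[rotated])
  have finB3: "finite B3"
  proof -
    have "finite f" if "f \<in> F" for f
    proof -
      have "card f = 2" using that F by (auto simp: all_edges_def)
      thus ?thesis by (intro card_ge_0_finite) simp
    qed
    thus ?thesis unfolding B3_def using finF by blast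
  qed
  have finB: "finite (B1 \<union> B2 \<union> B3)" using finB1 finB3 unfolding B2_def by blast
  have finP: "finite P" unfolding P_def using finNb by auto
  have "card P \<le> card ((P - (B1 \<union> B2 \<union> B3)) \<union> (B1 \<union> B2 \<union> B3))"
    by (rule card_mono[OF finite_UnI[OF finite_Diff[OF finP] finB]]) blast
  also have "\<dots> \<le> card (P - (B1 \<union> B2 \<union> B3)) + card (B1 \<union> B2 \<union> B3)" by (rule card_Un_le)
  finally have "card P \<le> card (P - (B1 \<union> B2 \<union> B3)) + card (B1 \<union> B2 \<union> B3)" .
  moreover have "card (B1 \<union> B2 \<union> B3) \<le> card B1 + card B2 + card B3"
    using card_Un_le[of "B1 \<union> B2" B3] card_Un_le[of B1 B2] by linarith
  ultimately show ?thesis using cP c1 cB1 cB2 cB3 by linarith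
qed


lemma finite_valid: assumes "G \<in> regular_graphs n d" shows "finite (valid F G a b)"
proof -
  have sub: "G \<subseteq> all_edges n" using assms reg_sub by blast
  have "valid F G a b \<subseteq> {1..n} \<times> {1..n}"
  proof
    fix p assume p: "p \<in> valid F G a b"
    obtain x y where pxy: "p = (x,y)" by (cases p)
    have e: "{x,y} \<in> G" using p pxy by (simp add: valid_def)
    show "p \<in> {1..n} \<times> {1..n}" using edge_props[OF sub e] pxy by simp
  qed
  thus ?thesis by (rule finite_subset) simp
qed

lemma switch_count:
  assumes F: "F \<subseteq> all_edges n" and abF: "{a,b} \<notin> F" and abn: "a \<in> {1..n}" "b \<in> {1..n}"
  shows "card {G \<in> regular_graphs n d. F \<subseteq> G \<and> {a,b} \<in> G} * (n*d - 4*d*d - 4*card F)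
     \<le> card {H \<in> regular_graphs n d. F \<subseteq> H \<and> {a,b} \<notin> H} * (d*d)"
proof -
  define A where "A = {G \<in> regular_graphs n d. F \<subseteq> G \<and> {a,b} \<in> G}"
  define B where "B = {H \<in> regular_graphs n d. F \<subseteq> H \<and> {a,b} \<notin> H}"
  define M where "M = n*d - 4*d*d - 4*card F"
  define T where "T = Sigma A (\<lambda>G. valid F G a b)"
  define \<phi> where "\<phi> = (\<lambda>(G::nat set set, (x::nat,y::nat)). (swp G a b x y, (x,y)))"
  define U where "U = Sigma B (\<lambda>H. Nb H a \<times> Nb H b)"
  have finA: "finite A" unfolding A_def using finite_regular[of n d] by simp
  have finB: "finite B" unfolding B_def using finite_regular[of n d] by simp
  have AR: "\<And>G. G \<in> A \<Longrightarrow> G \<in> regular_graphs n d" unfolding A_def by simp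
  have BR: "\<And>G. G \<in> B \<Longrightarrow> G \<in> regular_graphs n d" unfolding B_def by simp
  have "card A * M \<le> (\<Sum>G\<in>A. card (valid F G a b))"
  proof (rule sum_bounded_below[of A M "\<lambda>G. card (valid F G a b)", simplified])
    fix G assume G: "G \<in> A"
    have "n * d \<le> card (valid F G a b) + 4*d*d + 4 * card F"
      by (rule valid_lower[OF AR[OF G] _ F]) (use G in \<open>simp add: A_def\<close>)
    thus "M \<le> card (valid F G a b)" unfolding M_def by linarith
  qed
  also have "\<dots> = card T" unfolding T_def
    by (subst card_SigmaI) (auto simp: finA intro: finite_valid AR)
  also have "card T = card (\<phi> ` T)"
  proof (rule card_image[symmetric], rule inj_onI)
    fix p q assume p: "p \<in> T" and q: "q \<in> T" and eq: "\<phi> p = \<phi> q"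
    obtain G x y where pp: "p = (G,(x,y))" by (cases p) auto
    obtain G' x' y' where qq: "q = (G',(x',y'))" by (cases q) auto
    have e: "swp G a b x y = swp G' a b x' y'" "x = x'" "y = y'" using eq pp qq by (auto simp: \<phi>_def)
    have G: "G \<in> A" "(x,y) \<in> valid F G a b" using p pp by (auto simp: T_def)
    have G': "G' \<in> A" "(x',y') \<in> valid F G' a b" using q qq by (auto simp: T_def)
    have "G = (swp G a b x y - {{a,x},{b,y}}) \<union> {{a,b},{x,y}}"
      using swp_inv[OF AR[OF G(1)] _ G(2)] G(1) by (simp add: A_def)
    also have "\<dots> = (swp G' a b x' y' - {{a,x'},{b,y'}}) \<union> {{a,b},{x',y'}}" using e by simp
    also have "\<dots> = G'"
      using swp_inv[OF AR[OF G'(1)] _ G'(2)] G'(1) by (simp add: A_def)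
    finally show "p = q" using pp qq e by simp
  qed
  also have "\<dots> \<le> card U"
  proof (rule card_mono)
    show "finite U" unfolding U_def using finB
      by (auto intro!: finite_SigmaI simp: Nb_finite[OF reg_sub[OF BR]])
    show "\<phi> ` T \<subseteq> U"
    proof
      fix q assume "q \<in> \<phi> ` T"
      then obtain G x y where G: "G \<in> A" "(x,y) \<in> valid F G a b" and qq: "q = \<phi> (G,(x,y))"
        unfolding T_def by auto
      have GR: "G \<in> regular_graphs n d" "{a,b} \<in> G" "F \<subseteq> G" using G(1) by (auto simp: A_def)
      note sp = swp_props[OF GR(1) GR(2) G(2) GR(3) abF]
      have "swp G a b x y \<in> B" unfolding B_def using swp_regular[OF GR(1) GR(2) G(2)] sp by simp
      thus "q \<in> U" using qq sp unfolding U_def \<phi>_def by simp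
    qed
  qed
  also have "card U = card B * (d*d)"
  proof -
    have "card U = (\<Sum>H\<in>B. card (Nb H a \<times> Nb H b))" unfolding U_def
      by (subst card_SigmaI) (auto simp: finB Nb_finite[OF reg_sub[OF BR]])
    also have "\<dots> = (\<Sum>H\<in>B. d*d)"
      by (rule sum.cong) (use Nb_card[OF BR] abn in \<open>auto simp: card_cartesian_product\<close>)
    finally show ?thesis by simp
  qed
  finally show ?thesis unfolding A_def B_def M_def .
qed


lemma reg_from_rel:
  fixes R :: "nat \<Rightarrow> nat \<Rightarrow> bool"
  assumes R1: "\<And>u v. R u v \<Longrightarrow> u \<in> {1..n} \<and> v \<in> {1..n} \<and> u \<noteq> v"
    and Rs: "\<And>u v. R u v \<Longrightarrow> R v u"
    and Rc: "\<And>v. v \<in> {1..n} \<Longrightarrow> card {w. R v w} = d"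
  shows "{{u,w}| u w. R u w} \<in> regular_graphs n d"
proof -
  define E where "E = {{u,w}| u w. R u w}"
  have "E \<subseteq> all_edges n"
  proof
    fix e assume "e \<in> E"
    then obtain u w where e: "e = {u,w}" "R u w" unfolding E_def by blast
    thus "e \<in> all_edges n" using R1[OF e(2)] by (auto simp: all_edges_def)
  qed
  moreover have "degree E v = d" if v: "v \<in> {1..n}" for v
  proof -
    have "bij_betw (\<lambda>w. {v,w}) {w. R v w} {e\<in>E. v \<in> e}"
    proof (rule bij_betwI')
      fix y z assume "y \<in> {w. R v w}" "z \<in> {w. R v w}"
      show "({v, y} = {v, z}) = (y = z)" by (auto simp: doubleton_eq_iff)
    next
      fix y assume "y \<in> {w. R v w}" thus "{v,y} \<in> {e\<in>E. v \<in> e}" by (auto simp: E_def)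
    next
      fix e assume "e \<in> {e\<in>E. v \<in> e}"
      then obtain u w where e: "e = {u,w}" "R u w" "v \<in> e" unfolding E_def by blast
      show "\<exists>y\<in>{w. R v w}. e = {v, y}"
      proof (cases "v = u")
        case True thus ?thesis using e by auto
      next
        case False hence "v = w" using e by auto
        thus ?thesis using e Rs[OF e(2)] by (intro bexI[of _ u]) (auto simp: insert_commute)
      qed
    qed
    hence "degree E v = card {w. R v w}" unfolding degree_def by (simp add: bij_betw_same_card)
    thus ?thesis using Rc[OF v] by simp
  qed
  ultimately show ?thesis unfolding E_def[symmetric] by (simp add: regular_graphs_def)
qed

definition circD :: "nat \<Rightarrow> nat \<Rightarrow> int set" where
  "circD n d = {1..int (d div 2)} \<union> {int n - int (d div 2)..int n - 1} \<union>
     (if odd d then {int n div 2} else {})"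

lemma circD_props:
  assumes nd: "d < n" and ev: "even (d * n)"
  shows "circD n d \<subseteq> {1..int n - 1}" "\<And>t. t \<in> circD n d \<Longrightarrow> int n - t \<in> circD n d"
    "card (circD n d) = d"
proof -
  define h where "h = int (d div 2)"
  have h2: "2 * h < int n" using nd unfolding h_def by linarith
  have hd: "d = 2 * nat h + (if odd d then 1 else 0)" unfolding h_def by simp
  show "circD n d \<subseteq> {1..int n - 1}"
  proof
    fix t assume "t \<in> circD n d"
    moreover have "odd d \<Longrightarrow> 2 \<le> int n" using nd by (auto elim: oddE)
    ultimately show "t \<in> {1..int n - 1}" unfolding circD_def h_def[symmetric] using h2 nd
      by (auto split: if_splits)
  qed
  show "int n - t \<in> circD n d" if "t \<in> circD n d" for t
  proof (cases "odd d")
    case True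
    hence "even n" using ev by simp
    hence "int n - int n div 2 = int n div 2" by (auto elim!: evenE)
    thus ?thesis using that True unfolding circD_def h_def[symmetric] by auto
  next
    case False thus ?thesis using that unfolding circD_def h_def[symmetric] by auto
  qed
  have c1: "card ({1..h} \<union> {int n - h..int n - 1}) = 2 * nat h"
  proof -
    have "{1..h} \<inter> {int n - h..int n - 1} = {}" using h2 by auto
    hence "card ({1..h} \<union> {int n - h..int n - 1}) = card {1..h} + card {int n - h..int n - 1}"
      by (intro card_Un_disjoint) auto
    thus ?thesis by simp
  qed
  show "card (circD n d) = d"
  proof (cases "odd d")
    case True
    hence "even n" using ev by simp
    then obtain m where m: "n = 2 * m" by (auto elim!: evenE)
    have "2 * h + 1 < int n" using nd True unfolding h_def by (auto elim!: oddE)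
    hence nm: "h < int m" "int m < int n - h" using m by auto
    have "int n div 2 \<notin> {1..h} \<union> {int n - h..int n - 1}" using nm m by auto
    hence "card (circD n d) = Suc (2 * nat h)" unfolding circD_def h_def[symmetric]
      using True c1 by simp
    thus ?thesis using hd True by simp
  next
    case False
    thus ?thesis unfolding circD_def h_def[symmetric] using c1 hd by simp
  qed
qed

lemma card_circ_nb:
  fixes D :: "int set"
  assumes D: "D \<subseteq> {0..<int n}" and u: "u \<in> {1..n}"
  shows "card {w \<in> {1..n}. (int w - int u) mod int n \<in> D} = card D"
proof -
  define f where "f = (\<lambda>w::nat. (int w - int u) mod int n)"
  have np: "n > 0" using u by auto
  have inj: "inj_on f {1..n}"
  proof (rule inj_onI)
    fix w w' assume w: "w \<in> {1..n}" "w' \<in> {1..n}" and eq: "f w = f w'"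
    hence "(int w - int u) mod int n = (int w' - int u) mod int n" by (simp add: f_def)
    hence "int n dvd (int w - int u) - (int w' - int u)" by (simp add: mod_eq_dvd_iff)
    hence dv: "int n dvd int w - int w'" by simp
    have "\<bar>int w - int w'\<bar> < int n" using w by auto
    hence "int w - int w' = 0" using dv dvd_imp_le_int[of "int w - int w'" "int n"] by force
    thus "w = w'" by simp
  qed
  have img: "f ` {1..n} = {0..<int n}"
  proof (rule card_subset_eq)
    show "finite {0..<int n}" by simp
    show "f ` {1..n} \<subseteq> {0..<int n}" using np by (auto simp: f_def)
    show "card (f ` {1..n}) = card {0..<int n}" using card_image[OF inj] by simp
  qed
  have "card {w \<in> {1..n}. f w \<in> D} = card (f ` {w \<in> {1..n}. f w \<in> D})"
    by (rule card_image[symmetric]) (rule inj_on_subset[OF inj], auto)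
  also have "f ` {w \<in> {1..n}. f w \<in> D} = D"
  proof
    show "f ` {w \<in> {1..n}. f w \<in> D} \<subseteq> D" by auto
    show "D \<subseteq> f ` {w \<in> {1..n}. f w \<in> D}"
    proof
      fix t assume t: "t \<in> D"
      hence "t \<in> f ` {1..n}" using img D by auto
      then obtain w where "w \<in> {1..n}" "t = f w" by auto
      thus "t \<in> f ` {w \<in> {1..n}. f w \<in> D}" using t by auto
    qed
  qed
  finally show ?thesis by (simp add: f_def)
qed

lemma regular_exists:
  assumes nd: "d < n" and ev: "even (d * n)"
  shows "regular_graphs n d \<noteq> {}"
proof -
  define D where "D = circD n d"
  note Dp = circD_props[OF nd ev, folded D_def]
  define R where "R = (\<lambda>u w. u \<in> {1..n} \<and> w \<in> {1..n} \<and> (int w - int u) mod int n \<in> D)"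
  have "{{u,w}| u w. R u w} \<in> regular_graphs n d"
  proof (rule reg_from_rel)
    fix u v assume r: "R u v"
    have "u \<noteq> v"
    proof
      assume "u = v" hence "(int v - int u) mod int n = 0" by simp
      thus False using r Dp(1) unfolding R_def by force
    qed
    thus "u \<in> {1..n} \<and> v \<in> {1..n} \<and> u \<noteq> v" using r unfolding R_def by simp
    have t: "(int v - int u) mod int n \<in> D" using r unfolding R_def by simp
    hence nz: "(int v - int u) mod int n \<noteq> 0" using Dp(1) by force
    have "(int u - int v) mod int n = int n - (int v - int u) mod int n"
      using zmod_zminus1_eq_if[of "int v - int u" "int n"] nz by simp
    thus "R v u" using Dp(2)[OF t] r unfolding R_def by simp
  next
    fix v assume v: "v \<in> {1..n}"
    have "{w. R v w} = {w \<in> {1..n}. (int w - int v) mod int n \<in> D}" unfolding R_def using v by auto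
    also have "card \<dots> = card D" by (rule card_circ_nb) (use Dp(1) v in auto)
    finally show "card {w. R v w} = d" using Dp(3) by simp
  qed
  thus ?thesis by blast
qed


lemma step_bound:
  fixes n d j :: nat and a b :: "nat \<Rightarrow> nat"
  assumes d: "d \<ge> 1" and n16: "16 * d \<le> n" and jk: "8 * d * Suc j \<le> n"
    and ab: "\<forall>i\<in>{1..Suc j}. a i \<in> {1..n} \<and> b i \<in> {1..n} \<and> a i \<noteq> b i"
    and inj: "inj_on (\<lambda>i. {a i, b i}) {1..Suc j}"
  shows "card {G \<in> regular_graphs n d. \<forall>i\<in>{1..Suc j}. {a i, b i} \<in> G} * n
     \<le> 4 * d * card {G \<in> regular_graphs n d. \<forall>i\<in>{1..j}. {a i, b i} \<in> G}"
proof -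
  define F where "F = (\<lambda>i. {a i, b i}) ` {1..j}"
  define e where "e = {a (Suc j), b (Suc j)}"
  have F: "F \<subseteq> all_edges n" unfolding F_def all_edges_def using ab by auto
  have cF: "card F = j" unfolding F_def
    by (subst card_image) (auto intro: inj_on_subset[OF inj])
  have eF: "e \<notin> F"
  proof
    assume "e \<in> F"
    then obtain i where i: "i \<in> {1..j}" "{a i, b i} = e" unfolding F_def by auto
    hence "i = Suc j" using inj unfolding e_def by (auto dest: inj_onD)
    thus False using i by simp
  qed
  have abn: "a (Suc j) \<in> {1..n}" "b (Suc j) \<in> {1..n}" using ab by auto
  have eq1: "{G \<in> regular_graphs n d. \<forall>i\<in>{1..Suc j}. {a i, b i} \<in> G}
     = {G \<in> regular_graphs n d. F \<subseteq> G \<and> {a (Suc j), b (Suc j)} \<in> G}"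
  proof -
    have "{1..Suc j} = insert (Suc j) {1..j}" by auto
    thus ?thesis unfolding F_def by (auto simp: image_subset_iff)
  qed
  have eq2: "{G \<in> regular_graphs n d. \<forall>i\<in>{1..j}. {a i, b i} \<in> G} = {G \<in> regular_graphs n d. F \<subseteq> G}"
    unfolding F_def by (auto simp: image_subset_iff)
  define A where "A = card {G \<in> regular_graphs n d. \<forall>i\<in>{1..Suc j}. {a i, b i} \<in> G}"
  define S where "S = card {G \<in> regular_graphs n d. \<forall>i\<in>{1..j}. {a i, b i} \<in> G}"
  have "card {H \<in> regular_graphs n d. F \<subseteq> H \<and> {a (Suc j), b (Suc j)} \<notin> H} \<le> S"
    unfolding S_def eq2 by (rule card_mono) (auto simp: finite_regular)
  hence sw: "A * (n*d - 4*d*d - 4*j) \<le> S * (d*d)"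
    using switch_count[OF F eF[unfolded e_def] abn, of d] unfolding A_def eq1 cF
    by (meson le_trans mult_le_mono1)
  have h1: "16*d*d \<le> n*d" using n16 by simp
  have h2: "16*j \<le> 2*n*d"
  proof -
    have "16 * j \<le> 16 * d * j" using d by simp
    also have "\<dots> \<le> 2 * (8 * d * Suc j)" by simp
    also have "\<dots> \<le> 2 * n" using jk by simp
    also have "\<dots> \<le> 2 * n * d" using d by simp
    finally show ?thesis .
  qed
  have M: "n*d \<le> 4*(n*d - 4*d*d - 4*j)" using h1 h2 by linarith
  have "A * n * d \<le> 4 * d * S * d"
  proof -
    have "A * n * d = A * (n*d)" by simp
    also have "\<dots> \<le> A * (4*(n*d - 4*d*d - 4*j))" using M by simp
    also have "\<dots> = 4 * (A * (n*d - 4*d*d - 4*j))" by simp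
    also have "\<dots> \<le> 4 * (S * (d*d))" using sw by simp
    also have "\<dots> = 4 * d * S * d" by simp
    finally show ?thesis .
  qed
  hence "A * n \<le> 4 * d * S" using d by simp
  thus ?thesis unfolding A_def S_def .
qed


theorem mainTheorem7:
  fixes d :: nat
  shows "\<exists>N. \<forall>n\<ge>N. \<forall>k (a :: nat \<Rightarrow> nat) (b :: nat \<Rightarrow> nat).
     even (d * n) \<longrightarrow>
     (\<forall>i\<in>{1..k}. a i \<in> {1..n} \<and> b i \<in> {1..n} \<and> a i \<noteq> b i) \<longrightarrow>
     inj_on (\<lambda>i. {a i, b i}) {1..k} \<longrightarrow>
     real k \<le> real n / (8 * real d) \<longrightarrow>
     measure_pmf.prob (random_regular n d)
        {G. \<forall>i\<in>{1..k}. {a i, b i} \<in> G}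
       \<le> (20 * real d / real n) ^ k"
proof (rule exI[of _ "16 * d + 2"], intro allI impI)
  fix n k :: nat and a b :: "nat \<Rightarrow> nat"
  assume n: "16 * d + 2 \<le> n" and ev: "even (d * n)"
    and ab: "\<forall>i\<in>{1..k}. a i \<in> {1..n} \<and> b i \<in> {1..n} \<and> a i \<noteq> b i"
    and inj: "inj_on (\<lambda>i. {a i, b i}) {1..k}"
    and kb: "real k \<le> real n / (8 * real d)"
  show "measure_pmf.prob (random_regular n d) {G. \<forall>i\<in>{1..k}. {a i, b i} \<in> G}
       \<le> (20 * real d / real n) ^ k"
  proof (cases "k = 0")
    case True thus ?thesis by (simp add: measure_pmf.prob_le_1)
  next
    case False
    have d: "d \<ge> 1"
    proof (rule ccontr)
      assume "\<not> d \<ge> 1" hence "d = 0" by simp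
      thus False using kb False by simp
    qed
    have npos: "real n > 0" using n by simp
    have "real k * (8 * real d) \<le> real n" using kb d by (simp add: field_simps)
    hence "real (8 * d * k) \<le> real n" by (simp add: mult_ac)
    hence k8: "8 * d * k \<le> n" by (simp only: of_nat_le_iff)
    define R where "R = regular_graphs n d"
    define S where "S = (\<lambda>j. card {G \<in> R. \<forall>i\<in>{1..j}. {a i, b i} \<in> G})"
    have Rne: "R \<noteq> {}" unfolding R_def by (rule regular_exists) (use n ev in auto)
    have Rfin: "finite R" unfolding R_def by (rule finite_regular)
    have ind: "j \<le> k \<Longrightarrow> real (S j) \<le> (4 * real d / real n) ^ j * real (card R)" for j
    proof (induction j)
      case 0
      have "S 0 = card R" unfolding S_def by simp
      thus ?case by simp
    next
      case (Suc j)
      have st: "S (Suc j) * n \<le> 4 * d * S j" unfolding S_def R_def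
      proof (rule step_bound[OF d])
        show "16 * d \<le> n" using n by simp
        have "8 * d * Suc j \<le> 8 * d * k" using Suc.prems by (intro mult_le_mono2)
        thus "8 * d * Suc j \<le> n" using k8 by linarith
        show "\<forall>i\<in>{1..Suc j}. a i \<in> {1..n} \<and> b i \<in> {1..n} \<and> a i \<noteq> b i" using ab Suc.prems by auto
        show "inj_on (\<lambda>i. {a i, b i}) {1..Suc j}" using Suc.prems
          by (intro inj_on_subset[OF inj]) auto
      qed
      have "real (S (Suc j) * n) \<le> real (4 * d * S j)"
        using st by (simp only: of_nat_le_iff)
      hence "real (S (Suc j)) * real n \<le> 4 * real d * real (S j)" by simp
      hence "real (S (Suc j)) \<le> 4 * real d / real n * real (S j)"
        using npos by (simp add: field_simps)
      also have "\<dots> \<le> 4 * real d / real n * ((4 * real d / real n) ^ j * real (card R))"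
        using Suc by (intro mult_left_mono) auto
      finally show ?case by (simp add: mult_ac)
    qed
    have "measure_pmf.prob (random_regular n d) {G. \<forall>i\<in>{1..k}. {a i, b i} \<in> G}
        = real (S k) / real (card R)"
      unfolding random_regular_def R_def[symmetric] S_def
      by (subst measure_pmf_of_set[OF Rne Rfin]) (simp add: Int_def)
    also have "\<dots> \<le> (4 * real d / real n) ^ k"
      using ind[of k] Rne Rfin by (simp add: divide_le_eq card_gt_0_iff)
    also have "\<dots> \<le> (20 * real d / real n) ^ k"
      by (rule power_mono) (use npos in \<open>auto simp: divide_right_mono\<close>)
    finally show ?thesis .
  qed
qed

end
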